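(* Let $N\geq1$, $0\leq m\leq2$ and $\beta>0$. Let $a\in C(\mathbb{R}^N)\cap L^\infty(\mathbb{R}^N)$ with $a^+=\max\{0,a\}\not\equiv0$ and $\limsup_{|x|\to\infty}a(x)<0$. Let $J\in L^1(\mathbb{R}^N)$ be nonnegative, radially symmetric, with $\int_{\mathbb{R}^N}J=1$ and $\int_{\mathbb{R}^N}J(x)|x|^\beta\,\mathrm{d}x<\infty$; set $J_\varepsilon(z)=\varepsilon^{-N}J(z/\varepsilon)$. Then for every $\varepsilon>0$ there exist a constant $C_{\varepsilon,\beta}>0$ and a positive function $\overline{u}_{\varepsilon,\beta}\in C_0(\mathbb{R}^N)$ such that $$a^+(x)\leq\overline{u}_{\varepsilon,\beta}(x)\leq\frac{C_{\varepsilon,\beta}}{1+|x|^\beta}\quad\text{for all }x\in\mathbb{R}^N,$$ and $$\frac{1}{\varepsilon^m}\big(J_\varepsilon\ast\overline{u}_{\varepsilon,\beta}-\overline{u}_{\varepsilon,\beta}\big)+\overline{u}_{\varepsilon,\beta}(a-\overline{u}_{\varepsilon,\beta})\leq0\quad\text{in }\mathbb{R}^N.$$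
   Context: $(J_\varepsilon\ast u)(x)=\int_{\mathbb{R}^N}J_\varepsilon(x-y)u(y)\,\mathrm{d}y$. $C_0(\mathbb{R}^N)$ denotes continuous functions vanishing at infinity. *)

theory Defs
  imports "HOL-Analysis.Analysis"
begin

definition Jeps :: "real \<Rightarrow> ('a::euclidean_space \<Rightarrow> real) \<Rightarrow> 'a \<Rightarrow> real" where
  "Jeps \<epsilon> J z = (1 / \<epsilon> ^ DIM('a)) * J ((1 / \<epsilon>) *\<^sub>R z)"

definition conv :: "('a::euclidean_space \<Rightarrow> real) \<Rightarrow> ('a \<Rightarrow> real) \<Rightarrow> 'a \<Rightarrow> real" where
  "conv K u x = (\<integral>y. K (x - y) * u y \<partial>lborel)"

end

theory Submission imports Defs begin

lemma nn_integral_euc_affine: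
  fixes f :: "'a::euclidean_space \<Rightarrow> ennreal" and c :: real
  assumes [measurable]: "f \<in> borel_measurable borel" and c: "c \<noteq> 0"
  shows "(\<integral>\<^sup>+x. f x \<partial>lborel) = ennreal (\<bar>c\<bar> ^ DIM('a)) * (\<integral>\<^sup>+x. f (t + c *\<^sub>R x) \<partial>lborel)"
  by (subst lborel_affine[OF c, of t])
     (simp add: nn_integral_density nn_integral_distr nn_integral_cmult)

lemma euc_integrable_affine:
  fixes f :: "'a::euclidean_space \<Rightarrow> real"
  assumes f: "integrable lborel f" and c: "c \<noteq> 0"
  shows "integrable lborel (\<lambda>x. f (t + c *\<^sub>R x))"
  using f f[THEN borel_measurable_integrable] c unfolding integrable_iff_bounded
  by (subst (asm) nn_integral_euc_affine[where c=c and t=t]) (auto simp: ennreal_mult_less_top)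

lemma euc_integrable_affine_iff:
  fixes f :: "'a::euclidean_space \<Rightarrow> real"
  assumes c: "c \<noteq> 0"
  shows "integrable lborel (\<lambda>x. f (t + c *\<^sub>R x)) \<longleftrightarrow> integrable lborel f"
  using euc_integrable_affine[of f c t]
    euc_integrable_affine[of "\<lambda>x. f (t + c *\<^sub>R x)" "1/c" "-t/\<^sub>R c"] c
  by (auto simp add: field_simps)

lemma euc_integral_affine:
  fixes f :: "'a::euclidean_space \<Rightarrow> real" and c :: real
  assumes c: "c \<noteq> 0" shows "(\<integral>x. f x \<partial> lborel) = \<bar>c\<bar> ^ DIM('a) * (\<integral>x. f (t + c *\<^sub>R x) \<partial>lborel)"
proof cases
  assume f[measurable]: "integrable lborel f" then show ?thesis
    using c f f[THEN borel_measurable_integrable] f[THEN euc_integrable_affine, of c t]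
    by (subst lborel_affine[OF c, of t])
       (simp add: integral_density integral_distr)
next
  assume "\<not> integrable lborel f" with c show ?thesis
    by (simp add: euc_integrable_affine_iff not_integrable_integral_eq)
qed


lemma Jeps_facts:
  fixes J :: "'a::euclidean_space \<Rightarrow> real" and \<epsilon> \<beta> :: real
  assumes e: "\<epsilon> > 0" and J: "integrable lborel J" and Jn: "\<And>x. J x \<ge> 0"
    and J1: "(\<integral>x. J x \<partial>lborel) = 1"
    and Jb: "integrable lborel (\<lambda>x. J x * norm x powr \<beta>)"
  shows "integrable lborel (Jeps \<epsilon> J)" "\<And>z. Jeps \<epsilon> J z \<ge> 0"
    "(\<integral>z. Jeps \<epsilon> J z \<partial>lborel) = 1"
    "integrable lborel (\<lambda>z. Jeps \<epsilon> J z * norm z powr \<beta>)"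
proof -
  have c: "1/\<epsilon> \<noteq> 0" using e by simp
  have i1: "integrable lborel (\<lambda>z. J (0 + (1/\<epsilon>) *\<^sub>R z))"
    by (rule euc_integrable_affine[OF J c])
  show "integrable lborel (Jeps \<epsilon> J)"
    unfolding Jeps_def[abs_def] using i1 by simp
  show "\<And>z. Jeps \<epsilon> J z \<ge> 0" unfolding Jeps_def using e Jn by simp
  have "(\<integral>x. J x \<partial>lborel) = \<bar>1/\<epsilon>\<bar> ^ DIM('a) * (\<integral>z. J (0 + (1/\<epsilon>) *\<^sub>R z) \<partial>lborel)"
    by (rule euc_integral_affine[OF c])
  then have "(\<integral>z. J ((1/\<epsilon>) *\<^sub>R z) \<partial>lborel) = \<epsilon> ^ DIM('a)"
    using J1 e by (simp add: field_simps power_divide)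
  then show "(\<integral>z. Jeps \<epsilon> J z \<partial>lborel) = 1"
    unfolding Jeps_def using e by simp
  have i2: "integrable lborel (\<lambda>z. J (0 + (1/\<epsilon>) *\<^sub>R z) * norm (0 + (1/\<epsilon>) *\<^sub>R z) powr \<beta>)"
    by (rule euc_integrable_affine[OF Jb c])
  have eq: "Jeps \<epsilon> J z * norm z powr \<beta> = (\<epsilon> powr \<beta> / \<epsilon> ^ DIM('a)) *
      (J (0 + (1/\<epsilon>) *\<^sub>R z) * norm (0 + (1/\<epsilon>) *\<^sub>R z) powr \<beta>)" for z
  proof -
    have "norm z = \<epsilon> * norm ((1/\<epsilon>) *\<^sub>R z)" using e by simp
    then have "norm z powr \<beta> = \<epsilon> powr \<beta> * norm ((1/\<epsilon>) *\<^sub>R z) powr \<beta>"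
      using e by (metis norm_ge_zero powr_mult less_imp_le)
    then show ?thesis unfolding Jeps_def by simp
  qed
  show "integrable lborel (\<lambda>z. Jeps \<epsilon> J z * norm z powr \<beta>)"
    unfolding eq using i2 by (rule integrable_mult_right)
qed

lemma one_plus_sq_pos: "0 < 1 + (y::real)\<^sup>2"
  using zero_le_power2[of y] by linarith

definition phi :: "real \<Rightarrow> 'a::real_normed_vector \<Rightarrow> real" where
  "phi \<beta> x = (1 + (norm x)\<^sup>2) powr (-\<beta>/2)"

lemma phi_pos: "phi \<beta> x > 0"
  unfolding phi_def using one_plus_sq_pos[of "norm x"] by simp

lemma phi_le1: "\<beta> \<ge> 0 \<Longrightarrow> phi \<beta> x \<le> 1"
proof -
  assume b: "\<beta> \<ge> 0"
  have "(1 + (norm x)\<^sup>2) powr (-\<beta>/2) \<le> 1 powr (-\<beta>/2)"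
    by (rule powr_mono2') (use b in auto)
  then show ?thesis unfolding phi_def by simp
qed

lemma phi_mono: "\<beta> \<ge> 0 \<Longrightarrow> norm x \<le> r \<Longrightarrow> phi \<beta> x \<ge> (1 + r\<^sup>2) powr (-\<beta>/2)"
  unfolding phi_def
  by (rule powr_mono2') (auto intro!: add_pos_nonneg power_mono)

lemma phi_cont: "continuous_on UNIV (phi \<beta>)"
  unfolding phi_def[abs_def]
  by (intro continuous_intros) (use one_plus_sq_pos in \<open>auto simp: less_imp_neq[symmetric]\<close>)

lemma phi_meas[measurable]: "phi \<beta> \<in> borel_measurable borel"
  using phi_cont by (rule borel_measurable_continuous_onI)

lemma phi_lim: "\<beta> > 0 \<Longrightarrow> (phi \<beta> \<longlongrightarrow> 0) at_infinity"
  unfolding phi_def[abs_def]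
proof (rule tendsto_neg_powr)
  assume "\<beta> > 0" then show "- \<beta> / 2 < 0" by simp
  have "filterlim (\<lambda>x::'a. (norm x)\<^sup>2) at_top at_infinity"
    using filterlim_norm_at_top filterlim_pow_at_top by (intro filterlim_pow_at_top) auto
  then show "filterlim (\<lambda>x::'a. 1 + (norm x)\<^sup>2) at_top at_infinity"
    by (rule filterlim_tendsto_add_at_top[OF tendsto_const])
qed

lemma phi_upper: "\<beta> > 0 \<Longrightarrow> phi \<beta> x \<le> 2 / (1 + norm x powr \<beta>)"
proof -
  assume b: "\<beta> > 0"
  let ?s = "norm x"
  let ?q = "(1 + ?s\<^sup>2) powr (\<beta>/2)"
  have "?s powr \<beta> = (?s\<^sup>2) powr (\<beta>/2)"
  proof -
    have "(norm x)\<^sup>2 = norm x powr 2" by simp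
    then have "(norm x)\<^sup>2 powr (\<beta> / 2) = norm x powr (2 * (\<beta>/2))" by (simp only: powr_powr)
    then show ?thesis by simp
  qed
  also have "\<dots> \<le> ?q" by (rule powr_mono2) (use b in auto)
  finally have 1: "?s powr \<beta> \<le> ?q" .
  have 2: "1 \<le> ?q" by (rule ge_one_powr_ge_zero) (use b in auto)
  have qp: "?q > 0" using 2 by linarith
  have "phi \<beta> x = (1 + ?s\<^sup>2) powr (-(\<beta>/2))" unfolding phi_def by simp
  also have "\<dots> = 1 / ?q" by (simp only: powr_minus divide_inverse mult_1)
  also have "\<dots> = 2 / (2 * ?q)" using qp by simp
  also have "\<dots> \<le> 2 / (1 + ?s powr \<beta>)"
  proof (rule divide_left_mono)
    show "1 + ?s powr \<beta> \<le> 2 * ?q" using 1 2 by linarith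
    have "0 \<le> ?s powr \<beta>" by simp
    then show "0 < 2 * ?q * (1 + ?s powr \<beta>)" using qp by (intro mult_pos_pos) linarith+
  qed (use qp in simp)
  finally show ?thesis .
qed


lemma tail_small:
  fixes g :: "'a::euclidean_space \<Rightarrow> real"
  assumes g: "integrable lborel g" and gn: "\<And>z. g z \<ge> 0" and th: "\<theta> > 0"
  shows "\<exists>N::nat. \<forall>r \<ge> real N. (\<integral>z. g z * indicator {z. r < norm z} z \<partial>lborel) \<le> \<theta>"
proof -
  have [measurable]: "g \<in> borel_measurable borel" using g by (simp add: borel_measurable_integrable)
  have iI: "integrable lborel (\<lambda>z. g z * indicator {z. r < norm z} z)" for r
    by (rule integrable_real_mult_indicator) (use g in auto)
  have "(\<lambda>n. \<integral>z. g z * indicator {z. real n < norm z} z \<partial>lborel) \<longlonglongrightarrow> (\<integral>(z::'a). 0 \<partial>lborel)"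
  proof (rule integral_dominated_convergence[where w = g and f = "\<lambda>z. 0" and s = "\<lambda>n z. g z * indicator {z. real n < norm z} z"])
    show "AE z in lborel. (\<lambda>n. g z * indicator {z. real n < norm z} z) \<longlonglongrightarrow> 0"
    proof (rule AE_I2)
      fix z :: 'a
      obtain n0 :: nat where "norm z < real n0" using reals_Archimedean2 by blast
      then have "eventually (\<lambda>n. g z * indicator {z. real n < norm z} z = 0) sequentially"
        unfolding eventually_sequentially
        by (intro exI[of _ n0]) (auto simp: indicator_def)
      then show "(\<lambda>n. g z * indicator {z. real n < norm z} z) \<longlonglongrightarrow> 0"
        by (rule tendsto_eventually)
    qed
    show "AE z in lborel. norm (g z * indicator {z. real n < norm z} z) \<le> g z" for n
      using gn by (intro AE_I2) (auto simp: indicator_def)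
  qed (use g in auto)
  then have "eventually (\<lambda>n. (\<integral>z. g z * indicator {z. real n < norm z} z \<partial>lborel) < \<theta>) sequentially"
    using th by (intro order_tendstoD(2)) auto
  then obtain N where N: "\<And>n. n \<ge> N \<Longrightarrow> (\<integral>z. g z * indicator {z. real n < norm z} z \<partial>lborel) < \<theta>"
    unfolding eventually_sequentially by blast
  show ?thesis
  proof (intro exI allI impI)
    fix r assume r: "real N \<le> r"
    have "(\<integral>z. g z * indicator {z. r < norm z} z \<partial>lborel) \<le> (\<integral>z. g z * indicator {z. real N < norm z} z \<partial>lborel)"
      by (rule integral_mono[OF iI iI]) (use r gn in \<open>auto simp: indicator_def\<close>)
    also have "\<dots> < \<theta>" using N by simp
    finally show "(\<integral>z. g z * indicator {z. r < norm z} z \<partial>lborel) \<le> \<theta>" by simp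
  qed
qed


lemma phi_near:
  fixes x z :: "'a::real_normed_vector"
  assumes b: "\<beta> > 0" and t: "0 < t" "t < 1" and z: "norm z \<le> t * norm x"
  shows "phi \<beta> (x - z) \<le> (1 - t) powr (-\<beta>) * phi \<beta> x"
proof -
  let ?s = "norm x"
  have "norm (x - z) \<ge> ?s - norm z" by (rule norm_triangle_ineq2)
  then have d: "norm (x - z) \<ge> (1 - t) * ?s" using z by (simp add: algebra_simps)
  have "((1 - t) * ?s)\<^sup>2 \<le> (norm (x - z))\<^sup>2"
    by (rule power_mono[OF d]) (use t in simp)
  then have a1: "(1 - t)\<^sup>2 * ?s\<^sup>2 \<le> (norm (x - z))\<^sup>2" by (simp add: power_mult_distrib)
  have a2: "(1 - t)\<^sup>2 \<le> 1" using t by (simp add: power_le_one)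
  have le: "(1 - t)\<^sup>2 * (1 + ?s\<^sup>2) \<le> 1 + (norm (x - z))\<^sup>2"
    using a1 a2 by (simp add: distrib_left)
  have pos: "0 < (1 - t)\<^sup>2 * (1 + ?s\<^sup>2)"
    using t one_plus_sq_pos[of ?s] by simp
  have "phi \<beta> (x - z) \<le> ((1 - t)\<^sup>2 * (1 + ?s\<^sup>2)) powr (-\<beta>/2)"
    unfolding phi_def by (rule powr_mono2'[OF _ pos le]) (use b in simp)
  also have "\<dots> = ((1 - t)\<^sup>2) powr (-\<beta>/2) * phi \<beta> x"
    unfolding phi_def by (rule powr_mult)
  also have "((1 - t)\<^sup>2) powr (-\<beta>/2) = (1 - t) powr (-\<beta>)"
  proof -
    have "(1 - t)\<^sup>2 = (1 - t) powr 2" using t by simp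
    then have "((1 - t)\<^sup>2) powr (-\<beta>/2) = (1 - t) powr (2 * (-\<beta>/2))" by (simp only: powr_powr)
    then show ?thesis by simp
  qed
  finally show ?thesis .
qed

lemma phi_lower:
  fixes x :: "'a::real_normed_vector"
  assumes b: "\<beta> > 0" and s: "norm x \<ge> 1"
  shows "2 powr (-\<beta>/2) / norm x powr \<beta> \<le> phi \<beta> x"
proof -
  let ?s = "norm x"
  have le: "1 + ?s\<^sup>2 \<le> 2 * ?s\<^sup>2" using s by (simp add: power2_eq_square) (metis mult_mono' mult_1 zero_le_one)
  have "(2 * ?s\<^sup>2) powr (-\<beta>/2) \<le> phi \<beta> x"
    unfolding phi_def by (rule powr_mono2'[OF _ _ le]) (use b one_plus_sq_pos[of ?s] in auto)
  moreover have "(2 * ?s\<^sup>2) powr (-\<beta>/2) = 2 powr (-\<beta>/2) * ?s powr (-\<beta>)"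
  proof -
    have "?s\<^sup>2 = ?s powr 2" by simp
    then have "(?s\<^sup>2) powr (-\<beta>/2) = ?s powr (2 * (-\<beta>/2))" by (simp only: powr_powr)
    then show ?thesis by (simp add: powr_mult)
  qed
  moreover have "?s powr (-\<beta>) = 1 / ?s powr \<beta>" by (simp add: powr_minus divide_inverse)
  ultimately show ?thesis by simp
qed


lemma key:
  fixes K :: "'a::euclidean_space \<Rightarrow> real"
  assumes K: "integrable lborel K" and Kn: "\<And>z. K z \<ge> 0" and K1: "(\<integral>z. K z \<partial>lborel) = 1"
    and Kb: "integrable lborel (\<lambda>z. K z * norm z powr \<beta>)" and b: "\<beta> > 0" and eta: "\<eta> > 0"
  shows "\<exists>R\<ge>1. \<forall>x. R \<le> norm x \<longrightarrow> (\<integral>z. K z * phi \<beta> (x - z) \<partial>lborel) \<le> (1 + \<eta>) * phi \<beta> x"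
proof -
  have [measurable]: "K \<in> borel_measurable borel" using K by (simp add: borel_measurable_integrable)
  define t where "t = 1 - (1 + \<eta>/2) powr (-1/\<beta>)"
  have pl1: "(1 + \<eta>/2) powr (-1/\<beta>) < 1" by (rule powr_less_one) (use eta b in auto)
  have pg0: "(1 + \<eta>/2) powr (-1/\<beta>) > 0" using eta by simp
  have t0: "0 < t" and t1: "t < 1" using pl1 pg0 unfolding t_def by auto
  have tc: "(1 - t) powr (-\<beta>) = 1 + \<eta>/2"
  proof -
    have "(1 - t) powr (-\<beta>) = (1 + \<eta>/2) powr (-1/\<beta> * -\<beta>)"
      unfolding t_def by (simp add: powr_powr)
    also have "-1/\<beta> * -\<beta> = 1" using b by simp
    finally show ?thesis using eta by simp
  qed
  define \<theta> where "\<theta> = (\<eta>/2) * t powr \<beta> * 2 powr (-\<beta>/2)"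
  have th0: "\<theta> > 0" unfolding \<theta>_def using eta t0 by simp
  obtain N :: nat where N: "\<And>r. r \<ge> real N \<Longrightarrow>
      (\<integral>z. K z * norm z powr \<beta> * indicator {z. r < norm z} z \<partial>lborel) \<le> \<theta>"
    using tail_small[OF Kb _ th0] Kn by fastforce
  define R where "R = max 1 (real N / t)"
  show ?thesis
  proof (intro exI[of _ R] conjI allI impI)
    show "1 \<le> R" unfolding R_def by simp
    fix x :: 'a assume xR: "R \<le> norm x"
    define s where "s = norm x"
    have s1: "s \<ge> 1" using xR unfolding R_def s_def by simp
    have tsN: "t * s \<ge> real N" using xR t0 unfolding R_def s_def by (simp add: field_simps)
    have ts0: "t * s > 0" using t0 s1 by simp
    let ?I = "\<lambda>z. K z * norm z powr \<beta> * indicator {z. t * s < norm z} z"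
    have bd: "K z * \<bar>phi \<beta> (x - z)\<bar> \<le> K z" for z
    proof -
      have "\<bar>phi \<beta> (x - z)\<bar> \<le> 1" using phi_pos[of \<beta> "x - z"] phi_le1[of \<beta> "x - z"] b by simp
      then show ?thesis using Kn[of z] by (simp add: mult_left_le)
    qed
    have int1: "integrable lborel (\<lambda>z. K z * phi \<beta> (x - z))"
      by (rule Bochner_Integration.integrable_bound[OF K]) (use Kn bd in \<open>auto intro!: AE_I2 simp: abs_mult\<close>)
    have intI: "integrable lborel ?I"
      by (rule integrable_real_mult_indicator) (use Kb in auto)
    have int2: "integrable lborel (\<lambda>z. (1 + \<eta>/2) * phi \<beta> x * K z + ?I z / (t * s) powr \<beta>)"
      by (intro Bochner_Integration.integrable_add Bochner_Integration.integrable_mult_right Bochner_Integration.integrable_divide K intI)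
    have pw: "K z * phi \<beta> (x - z) \<le> (1 + \<eta>/2) * phi \<beta> x * K z + ?I z / (t * s) powr \<beta>" for z
    proof (cases "norm z \<le> t * s")
      case True
      have "phi \<beta> (x - z) \<le> (1 + \<eta>/2) * phi \<beta> x"
        using phi_near[OF b t0 t1, of z x] True tc unfolding s_def by simp
      then have "K z * phi \<beta> (x - z) \<le> (1 + \<eta>/2) * phi \<beta> x * K z"
        using Kn[of z] by (simp add: mult_left_mono mult.commute)
      moreover have "?I z = 0" using True by (simp add: indicator_def)
      ultimately show ?thesis by (simp only:)
    next
      case False
      have "1 \<le> norm z powr \<beta> / (t * s) powr \<beta>"
      proof -
        have "(t * s) powr \<beta> \<le> norm z powr \<beta>"
          by (rule powr_mono2) (use b ts0 False in auto)
        moreover have "(t * s) powr \<beta> > 0" using t0 s1 by simp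
        ultimately show ?thesis by simp
      qed
      moreover have "phi \<beta> (x - z) \<le> 1" using b by (intro phi_le1) simp
      ultimately have "K z * phi \<beta> (x - z) \<le> K z * (norm z powr \<beta> / (t * s) powr \<beta>)"
        using Kn[of z] by (intro mult_left_mono) auto
      moreover have "?I z / (t * s) powr \<beta> = K z * (norm z powr \<beta> / (t * s) powr \<beta>)" using False by (simp add: indicator_def)
      moreover have "0 \<le> (1 + \<eta>/2) * phi \<beta> x * K z"
        using Kn[of z] eta phi_pos[of \<beta> x] by simp
      ultimately show ?thesis by linarith
    qed
    have "(\<integral>z. K z * phi \<beta> (x - z) \<partial>lborel) \<le>
        (\<integral>z. (1 + \<eta>/2) * phi \<beta> x * K z + ?I z / (t * s) powr \<beta> \<partial>lborel)"
      by (rule integral_mono[OF int1 int2 pw])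
    also have "\<dots> = (1 + \<eta>/2) * phi \<beta> x * (\<integral>z. K z \<partial>lborel) + (\<integral>z. ?I z \<partial>lborel) / (t * s) powr \<beta>"
      using K intI by (simp add: integral_add integrable_divide)
    also have "\<dots> \<le> (1 + \<eta>/2) * phi \<beta> x + \<theta> / (t * s) powr \<beta>"
      using N[OF tsN] K1 ts0 by (simp add: divide_right_mono)
    also have "\<theta> / (t * s) powr \<beta> = (\<eta>/2) * (2 powr (-\<beta>/2) / s powr \<beta>)"
      unfolding \<theta>_def using t0 s1 by (simp add: powr_mult)
    also have "\<dots> \<le> (\<eta>/2) * phi \<beta> x"
      using phi_lower[OF b, of x] s1 eta unfolding s_def by (intro mult_left_mono) auto
    finally show "(\<integral>z. K z * phi \<beta> (x - z) \<partial>lborel) \<le> (1 + \<eta>) * phi \<beta> x"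
      by (simp add: algebra_simps)
  qed
qed


lemma conv_eq:
  fixes K u :: "'a::euclidean_space \<Rightarrow> real"
  assumes K: "integrable lborel K" and u[measurable]: "u \<in> borel_measurable borel"
    and B: "\<And>y. \<bar>u y\<bar> \<le> B"
  shows "integrable lborel (\<lambda>y. K (x - y) * u y)" "conv K u x = (\<integral>z. K z * u (x - z) \<partial>lborel)"
proof -
  have [measurable]: "K \<in> borel_measurable borel" using K by (simp add: borel_measurable_integrable)
  have hi: "integrable lborel (\<lambda>z. K z * u (x - z))"
  proof (rule Bochner_Integration.integrable_bound[OF integrable_mult_right[OF K, of B]])
    show "AE z in lborel. norm (K z * u (x - z)) \<le> norm (B * K z)"
    proof (rule AE_I2)
      fix z
      have "\<bar>K z\<bar> * \<bar>u (x - z)\<bar> \<le> \<bar>K z\<bar> * B" by (rule mult_left_mono[OF B]) simp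
      moreover have "B \<ge> 0" using B[of 0] by simp
      ultimately show "norm (K z * u (x - z)) \<le> norm (B * K z)" by (simp add: abs_mult mult.commute)
    qed
  qed simp
  have c: "(-1::real) \<noteq> 0" by simp
  have e: "(\<lambda>y. (\<lambda>z. K z * u (x - z)) (x + (-1) *\<^sub>R y)) = (\<lambda>y. K (x - y) * u y)" by simp
  show "integrable lborel (\<lambda>y. K (x - y) * u y)"
    using euc_integrable_affine[OF hi c, of x] unfolding e .
  have "(\<integral>z. K z * u (x - z) \<partial>lborel) = \<bar>-1::real\<bar> ^ DIM('a) * (\<integral>y. (\<lambda>z. K z * u (x - z)) (x + (-1) *\<^sub>R y) \<partial>lborel)"
    by (rule euc_integral_affine[OF c])
  then show "conv K u x = (\<integral>z. K z * u (x - z) \<partial>lborel)"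
    unfolding e conv_def by simp
qed


lemma Kphi:
  fixes K :: "'a::euclidean_space \<Rightarrow> real"
  assumes K: "integrable lborel K" and Kn: "\<And>z. K z \<ge> 0" and K1: "(\<integral>z. K z \<partial>lborel) = 1"
    and b: "\<beta> \<ge> 0"
  shows "integrable lborel (\<lambda>z. K z * phi \<beta> (x - z))" "(\<integral>z. K z * phi \<beta> (x - z) \<partial>lborel) \<le> 1"
proof -
  have [measurable]: "K \<in> borel_measurable borel" using K by (simp add: borel_measurable_integrable)
  have bd: "K z * \<bar>phi \<beta> (x - z)\<bar> \<le> K z" for z
  proof -
    have "\<bar>phi \<beta> (x - z)\<bar> \<le> 1" using phi_pos[of \<beta> "x - z"] phi_le1[of \<beta> "x - z"] b by simp
    then show ?thesis using Kn[of z] by (simp add: mult_left_le)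
  qed
  show int1: "integrable lborel (\<lambda>z. K z * phi \<beta> (x - z))"
    by (rule Bochner_Integration.integrable_bound[OF K]) (use Kn bd in \<open>auto intro!: AE_I2 simp: abs_mult\<close>)
  have "(\<integral>z. K z * phi \<beta> (x - z) \<partial>lborel) \<le> (\<integral>z. K z \<partial>lborel)"
    by (rule integral_mono[OF int1 K]) (metis bd phi_pos abs_of_pos)
  then show "(\<integral>z. K z * phi \<beta> (x - z) \<partial>lborel) \<le> 1" using K1 by simp
qed

theorem lemma3p2:
  fixes a :: "'a::euclidean_space \<Rightarrow> real"
    and J :: "'a \<Rightarrow> real"
    and m \<beta> :: real
  assumes "0 \<le> m" and "m \<le> 2" and "\<beta> > 0"
    and "continuous_on UNIV a" and "bounded (range a)"
    and "\<exists>x. max 0 (a x) \<noteq> 0"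
    and "Limsup at_infinity (\<lambda>x. ereal (a x)) < 0"
    and "integrable lborel J"
    and "\<And>x. J x \<ge> 0"
    and "\<And>x y. norm x = norm y \<Longrightarrow> J x = J y"
    and "(\<integral>x. J x \<partial>lborel) = 1"
    and "integrable lborel (\<lambda>x. J x * norm x powr \<beta>)"
  shows "\<forall>\<epsilon>>0. \<exists>C>0. \<exists>u :: 'a \<Rightarrow> real.
           (\<forall>x. u x > 0) \<and> continuous_on UNIV u \<and> (u \<longlongrightarrow> 0) at_infinity \<and>
           (\<forall>x. max 0 (a x) \<le> u x \<and> u x \<le> C / (1 + norm x powr \<beta>)) \<and>
           (\<forall>x. integrable lborel (\<lambda>y. Jeps \<epsilon> J (x - y) * u y)) \<and>
           (\<forall>x. (1 / \<epsilon> powr m) * (conv (Jeps \<epsilon> J) u x - u x) + u x * (a x - u x) \<le> 0)"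
proof (intro allI impI)
  fix \<epsilon> :: real assume e: "\<epsilon> > 0"
  have b: "\<beta> > 0" using assms(3) .
  define K where "K = Jeps \<epsilon> J"
  have K: "integrable lborel K" and Kn: "\<And>z. K z \<ge> 0" and K1: "(\<integral>z. K z \<partial>lborel) = 1"
    and Kb: "integrable lborel (\<lambda>z. K z * norm z powr \<beta>)"
    using Jeps_facts[OF e assms(8,9,11,12)] unfolding K_def by auto
  define c0 where "c0 = \<epsilon> powr m"
  have c0: "c0 > 0" unfolding c0_def using e by simp
  obtain d where d1: "Limsup at_infinity (\<lambda>x. ereal (a x)) < ereal d" and d2: "ereal d < 0"
    using ereal_dense2[OF assms(7)] by blast
  have "eventually (\<lambda>x. ereal (a x) < ereal d) at_infinity" by (rule Limsup_lessD[OF d1])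
  then obtain R0 where R0: "\<And>x. R0 \<le> norm x \<Longrightarrow> a x < d"
    unfolding eventually_at_infinity by auto
  define \<delta> where "\<delta> = - d"
  have \<delta>: "\<delta> > 0" using d2 unfolding \<delta>_def by simp
  obtain A where A: "\<And>x. \<bar>a x\<bar> \<le> A" using assms(5) unfolding bounded_iff by auto
  have A0: "A \<ge> 0" using A[of 0] by simp
  obtain R1 where R1: "\<And>x. R1 \<le> norm x \<Longrightarrow> (\<integral>z. K z * phi \<beta> (x - z) \<partial>lborel) \<le> (1 + c0 * \<delta>) * phi \<beta> x"
    using key[OF K Kn K1 Kb b, of "c0 * \<delta>"] c0 \<delta> by auto
  define R where "R = max R0 R1"
  define p where "p = (1 + R\<^sup>2) powr (-\<beta>/2)"
  have p0: "p > 0" unfolding p_def using one_plus_sq_pos[of R] by simp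
  define M where "M = (1 / (c0 * p) + A + 1) / p"
  have Mp: "M * p = 1 / (c0 * p) + A + 1" unfolding M_def using p0 by simp
  have M0: "M > 0" unfolding M_def using p0 c0 A0 by (simp add: add_pos_nonneg)
  define u where "u = (\<lambda>x::'a. M * phi \<beta> x)"
  have upos: "u x > 0" for x unfolding u_def using M0 phi_pos[of \<beta> x] by simp
  have ule: "\<bar>u y\<bar> \<le> M" for y
    unfolding u_def using M0 phi_pos[of \<beta> y] phi_le1[of \<beta> y] b by (simp add: abs_mult mult_left_le)
  have ucont: "continuous_on UNIV u" unfolding u_def by (intro continuous_on_mult_left phi_cont)
  have umeas[measurable]: "u \<in> borel_measurable borel" unfolding u_def by measurable
  have ulim: "(u \<longlongrightarrow> 0) at_infinity"
    unfolding u_def using tendsto_mult[OF tendsto_const[of M] phi_lim[OF b]] by simp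
  have near: "phi \<beta> x \<ge> p" if "norm x < R" for x :: 'a
    unfolding p_def by (rule phi_mono) (use b that in auto)
  show "\<exists>C>0. \<exists>u :: 'a \<Rightarrow> real.
           (\<forall>x. u x > 0) \<and> continuous_on UNIV u \<and> (u \<longlongrightarrow> 0) at_infinity \<and>
           (\<forall>x. max 0 (a x) \<le> u x \<and> u x \<le> C / (1 + norm x powr \<beta>)) \<and>
           (\<forall>x. integrable lborel (\<lambda>y. Jeps \<epsilon> J (x - y) * u y)) \<and>
           (\<forall>x. (1 / \<epsilon> powr m) * (conv (Jeps \<epsilon> J) u x - u x) + u x * (a x - u x) \<le> 0)"
  proof (intro exI[of _ "2 * M"] exI[of _ u] conjI allI)
    show "2 * M > 0" using M0 by simp
    show "u x > 0" for x by (rule upos)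
    show "continuous_on UNIV u" by (rule ucont)
    show "(u \<longlongrightarrow> 0) at_infinity" by (rule ulim)
    fix x :: 'a
    show "max 0 (a x) \<le> u x"
    proof (cases "R \<le> norm x")
      case True
      then have "a x < 0" using R0[of x] d2 unfolding R_def by simp
      then show ?thesis using upos[of x] by simp
    next
      case False
      then have "phi \<beta> x \<ge> p" by (intro near) simp
      then have "u x \<ge> M * p" unfolding u_def using M0 by simp
      moreover have "M * p \<ge> a x"
      proof -
        have "0 < 1 / (c0 * p)" using c0 p0 by simp
        then show ?thesis using Mp A[of x] by linarith
      qed
      ultimately show ?thesis using upos[of x] by simp
    qed
    show "u x \<le> 2 * M / (1 + norm x powr \<beta>)"
      unfolding u_def using mult_left_mono[OF phi_upper[OF b, of x], of M] M0 by (simp add: mult.commute)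
    show "integrable lborel (\<lambda>y. Jeps \<epsilon> J (x - y) * u y)"
      using conv_eq(1)[OF K umeas ule] unfolding K_def .
    have cv: "conv K u x = M * (\<integral>z. K z * phi \<beta> (x - z) \<partial>lborel)"
    proof -
      have "conv K u x = (\<integral>z. K z * u (x - z) \<partial>lborel)" by (rule conv_eq(2)[OF K umeas ule])
      also have "\<dots> = (\<integral>z. M * (K z * phi \<beta> (x - z)) \<partial>lborel)"
        unfolding u_def by (simp add: mult.left_commute)
      also have "\<dots> = M * (\<integral>z. K z * phi \<beta> (x - z) \<partial>lborel)" by (rule integral_mult_right_zero)
      finally show ?thesis .
    qed
    define I where "I = (\<integral>z. K z * phi \<beta> (x - z) \<partial>lborel)"
    have I1: "I \<le> 1" unfolding I_def by (rule Kphi(2)[OF K Kn K1]) (use b in simp)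
    have main: "conv K u x - u x \<le> c0 * (u x * (u x - a x))"
    proof (cases "R \<le> norm x")
      case True
      have "I \<le> (1 + c0 * \<delta>) * phi \<beta> x" unfolding I_def by (rule R1) (use True in \<open>simp add: R_def\<close>)
      then have "conv K u x - u x \<le> M * ((1 + c0 * \<delta>) * phi \<beta> x) - u x"
        unfolding cv I_def[symmetric] using M0 by simp
      also have "\<dots> = c0 * (u x * \<delta>)" unfolding u_def by (simp add: algebra_simps)
      also have "\<dots> \<le> c0 * (u x * (u x - a x))"
      proof -
        have "a x < - \<delta>" using R0[of x] True unfolding R_def \<delta>_def by simp
        then have "\<delta> \<le> u x - a x" using upos[of x] by simp
        then show ?thesis using upos[of x] c0 by (intro mult_left_mono) auto
      qed
      finally show ?thesis .
    next
      case False
      then have ph: "phi \<beta> x \<ge> p" by (intro near) simp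
      have "conv K u x - u x \<le> M" unfolding cv I_def[symmetric] using I1 M0 upos[of x]
        by (smt (verit) mult_left_le)
      also have "M = c0 * (M * p * (1 / (c0 * p)))" using c0 p0 by (simp add: field_simps)
      also have "\<dots> \<le> c0 * (u x * (u x - a x))"
      proof (rule mult_left_mono)
        have "M * p \<le> u x" unfolding u_def using ph M0 by simp
        moreover have "1 / (c0 * p) \<le> u x - a x" using \<open>M * p \<le> u x\<close> Mp A[of x] by linarith
        moreover have "0 \<le> u x" using upos[of x] by simp
        moreover have "0 \<le> 1 / (c0 * p)" using c0 p0 by simp
        ultimately show "M * p * (1 / (c0 * p)) \<le> u x * (u x - a x)" by (rule mult_mono)
      qed (use c0 in simp)
      finally show ?thesis .
    qed
    have "(1 / \<epsilon> powr m) * (conv K u x - u x) \<le> (1 / c0) * (c0 * (u x * (u x - a x)))"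
      unfolding c0_def[symmetric] by (rule mult_left_mono[OF main]) (use c0 in simp)
    also have "\<dots> = u x * (u x - a x)" using c0 by simp
    finally show "(1 / \<epsilon> powr m) * (conv (Jeps \<epsilon> J) u x - u x) + u x * (a x - u x) \<le> 0"
      unfolding K_def by (simp add: algebra_simps)
  qed
qed

end
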